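(* Let $L$ be a multisorted algebra in the positive existential signature satisfying axioms (0), (1), (2), (3), (4), (8). Then there is a set $W$ and an almost morphism $\varphi\colon L\to A(W)$ into the positive existential algebra of $W$ which is injective on each sort.
   Context: The Boolean prime ideal theorem (equivalently, compactness) is assumed. Signature. There is a sort $n$ for each $n\ge0$. For every function $\alpha\colon\{1,\dots,n\}\to\{1,\dots,k\}$ there is a unary function symbol ("substitution") $\alpha\colon n\to k$ (argument of sort $n$, value of sort $k$). Each sort has $0,1,\vee,\wedge$; for each $n$ there is $\exists\colon n+1\to n$ (positive existential signature). For $\alpha\colon k\to n$, $\beta\colon n\to m$, $\beta\circ\alpha$ is the substitution symbol of the composite function; $\mathrm{id}$ is the identity substitution. The associated cylindrification of $\exists\colon n+1\to n$ is $c\colon n\to n+1$, $c(i)=i$. For a set $W$: $\alpha^{\mathrm{tuple}}(x_1,\dots,x_k)=(x_{\alpha(1)},\dots,x_{\alpha(n)})$, $\alpha^{\mathrm{relation}}(r)=\{\bar x\in W^k:\alpha^{\mathrm{tuple}}(\bar x)\in r\}$. The positive existential algebra $A(W)$ interprets sort $n$ as $\mathcal P(W^n)$, $\alpha$ as $\alpha^{\mathrm{relation}}$, $0,1,\vee,\wedge$ as $\emptyset,W^n,\cup,\cap$, and $\exists(r)=\{\bar x:\exists y\,(\bar x,y)\in r\}$. An almost morphism $\varphi\colon L\to A(W)$ is a sort-preserving family of maps commuting with all substitutions and with $0,1,\vee,\wedge$, and satisfying $\exists(\varphi(r))\subseteq\varphi(\exists(r))$. Partitioning cylindrifications: for $k_1,\dots,k_m$,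 $n=\sum k_j$, the substitutions $c_i\colon k_i\to n$, $c_i(l)=l+\sum_{j<i}k_j$. $x\le y$ (also $y\ge x$) means $x=x\wedge y$. Axioms: (0) For partitioning cylindrifications $c_1,\dots,c_m$ and $r_i,s_i$ of sort $k_i$: if $\bigvee_i c_i(s_i)\ge\bigwedge_i c_i(r_i)$ then $s_i\ge r_i$ for some $i$ (including $m=0$: $0\ge1$ fails in sort $0$). (1) Each sort is a bounded distributive lattice. (2) Substitutions preserve $0,1,\vee,\wedge$. (3) $(\beta\circ\alpha)(r)=\beta(\alpha(r))$. (4) $\mathrm{id}(r)=r$. (8) $r\le c(\exists(r))$. *)

theory Defs
  imports Main "HOL-Library.FuncSet"
begin

text \<open>A substitution symbol for a function alpha from {1..n} to {1..k} is
  sb L n k alpha (from sort n to sort k), where alpha ranges over the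
  extensional functions {1..n} \<rightarrow>E {1..k} (one per function).
  ex L n is the existential quantifier from sort n+1 to sort n.\<close>

record 'a pe_alg =
  car :: "nat \<Rightarrow> 'a set"
  zer :: "nat \<Rightarrow> 'a"
  one :: "nat \<Rightarrow> 'a"
  jn  :: "nat \<Rightarrow> 'a \<Rightarrow> 'a \<Rightarrow> 'a"
  mt  :: "nat \<Rightarrow> 'a \<Rightarrow> 'a \<Rightarrow> 'a"
  ex  :: "nat \<Rightarrow> 'a \<Rightarrow> 'a"
  sb  :: "nat \<Rightarrow> nat \<Rightarrow> (nat \<Rightarrow> nat) \<Rightarrow> 'a \<Rightarrow> 'a"

definition substs :: "nat \<Rightarrow> nat \<Rightarrow> (nat \<Rightarrow> nat) set" where
  "substs n k = ({1..n} \<rightarrow>\<^sub>E {1..k})"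

definition scomp :: "nat \<Rightarrow> (nat \<Rightarrow> nat) \<Rightarrow> (nat \<Rightarrow> nat) \<Rightarrow> (nat \<Rightarrow> nat)" where
  "scomp k beta alpha = (\<lambda>i\<in>{1..k}. beta (alpha i))"

definition sid :: "nat \<Rightarrow> (nat \<Rightarrow> nat)" where
  "sid n = (\<lambda>i\<in>{1..n}. i)"

text \<open>The cylindrification c : n -> n+1, c(i) = i.\<close>
definition cyl :: "nat \<Rightarrow> (nat \<Rightarrow> nat)" where
  "cyl n = (\<lambda>i\<in>{1..n}. i)"

text \<open>Partitioning cylindrification c_i : k_i -> n for the family k_0,...,k_(m-1)
  (indexed from 0): c_i(l) = l + sum_{j<i} k_j.\<close>
definition pcyl :: "(nat \<Rightarrow> nat) \<Rightarrow> nat \<Rightarrow> (nat \<Rightarrow> nat)" where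
  "pcyl ks i = (\<lambda>l\<in>{1..ks i}. l + (\<Sum>j<i. ks j))"

definition le :: "('a, 'b) pe_alg_scheme \<Rightarrow> nat \<Rightarrow> 'a \<Rightarrow> 'a \<Rightarrow> bool" where
  "le L n x y \<longleftrightarrow> x = mt L n x y"

fun joins :: "('a, 'b) pe_alg_scheme \<Rightarrow> nat \<Rightarrow> (nat \<Rightarrow> 'a) \<Rightarrow> nat \<Rightarrow> 'a" where
  "joins L n f 0 = zer L n"
| "joins L n f (Suc m) = jn L n (joins L n f m) (f m)"

fun meets :: "('a, 'b) pe_alg_scheme \<Rightarrow> nat \<Rightarrow> (nat \<Rightarrow> 'a) \<Rightarrow> nat \<Rightarrow> 'a" where
  "meets L n f 0 = one L n"
| "meets L n f (Suc m) = mt L n (meets L n f m) (f m)"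

definition pe_algebra :: "('a, 'b) pe_alg_scheme \<Rightarrow> bool" where
  "pe_algebra L \<longleftrightarrow>
     (\<forall>n. zer L n \<in> car L n \<and> one L n \<in> car L n) \<and>
     (\<forall>n x y. x \<in> car L n \<longrightarrow> y \<in> car L n \<longrightarrow> jn L n x y \<in> car L n \<and> mt L n x y \<in> car L n) \<and>
     (\<forall>n x. x \<in> car L (Suc n) \<longrightarrow> ex L n x \<in> car L n) \<and>
     (\<forall>n k \<alpha> x. \<alpha> \<in> substs n k \<longrightarrow> x \<in> car L n \<longrightarrow> sb L n k \<alpha> x \<in> car L k)"

definition ax0 :: "('a, 'b) pe_alg_scheme \<Rightarrow> bool" where
  "ax0 L \<longleftrightarrow>
    (\<forall>(m::nat) (ks::nat \<Rightarrow> nat) (r::nat \<Rightarrow> 'a) (s::nat \<Rightarrow> 'a).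
      (\<forall>i<m. r i \<in> car L (ks i) \<and> s i \<in> car L (ks i)) \<longrightarrow>
      le L (\<Sum>j<m. ks j)
         (meets L (\<Sum>j<m. ks j) (\<lambda>i. sb L (ks i) (\<Sum>j<m. ks j) (pcyl ks i) (r i)) m)
         (joins L (\<Sum>j<m. ks j) (\<lambda>i. sb L (ks i) (\<Sum>j<m. ks j) (pcyl ks i) (s i)) m)
      \<longrightarrow> (\<exists>i<m. le L (ks i) (r i) (s i)))"

definition ax1 :: "('a, 'b) pe_alg_scheme \<Rightarrow> bool" where
  "ax1 L \<longleftrightarrow> (\<forall>n. \<forall>x\<in>car L n. \<forall>y\<in>car L n. \<forall>z\<in>car L n.
      jn L n x (jn L n y z) = jn L n (jn L n x y) z \<and>
      mt L n x (mt L n y z) = mt L n (mt L n x y) z \<and>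
      jn L n x y = jn L n y x \<and>
      mt L n x y = mt L n y x \<and>
      jn L n x (mt L n x y) = x \<and>
      mt L n x (jn L n x y) = x \<and>
      mt L n x (jn L n y z) = jn L n (mt L n x y) (mt L n x z) \<and>
      jn L n x (zer L n) = x \<and>
      mt L n x (one L n) = x)"

definition ax2 :: "('a, 'b) pe_alg_scheme \<Rightarrow> bool" where
  "ax2 L \<longleftrightarrow> (\<forall>n k \<alpha>. \<alpha> \<in> substs n k \<longrightarrow>
      sb L n k \<alpha> (zer L n) = zer L k \<and>
      sb L n k \<alpha> (one L n) = one L k \<and>
      (\<forall>x\<in>car L n. \<forall>y\<in>car L n.
         sb L n k \<alpha> (jn L n x y) = jn L k (sb L n k \<alpha> x) (sb L n k \<alpha> y) \<and>
         sb L n k \<alpha> (mt L n x y) = mt L k (sb L n k \<alpha> x) (sb L n k \<alpha> y)))"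

definition ax3 :: "('a, 'b) pe_alg_scheme \<Rightarrow> bool" where
  "ax3 L \<longleftrightarrow> (\<forall>k n m \<alpha> \<beta>. \<alpha> \<in> substs k n \<longrightarrow> \<beta> \<in> substs n m \<longrightarrow>
      (\<forall>r\<in>car L k. sb L k m (scomp k \<beta> \<alpha>) r = sb L n m \<beta> (sb L k n \<alpha> r)))"

definition ax4 :: "('a, 'b) pe_alg_scheme \<Rightarrow> bool" where
  "ax4 L \<longleftrightarrow> (\<forall>n. \<forall>r\<in>car L n. sb L n n (sid n) r = r)"

definition ax8 :: "('a, 'b) pe_alg_scheme \<Rightarrow> bool" where
  "ax8 L \<longleftrightarrow> (\<forall>n. \<forall>r\<in>car L (Suc n). le L (Suc n) r (sb L n (Suc n) (cyl n) (ex L n r)))"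

text \<open>W^n is represented by lists of length n over W; the i-th coordinate
  (1-based) of xs is xs ! (i - 1).\<close>
definition tuples :: "'w set \<Rightarrow> nat \<Rightarrow> 'w list set" where
  "tuples W n = {xs. length xs = n \<and> set xs \<subseteq> W}"

definition subst_tuple :: "nat \<Rightarrow> (nat \<Rightarrow> nat) \<Rightarrow> 'w list \<Rightarrow> 'w list" where
  "subst_tuple n \<alpha> xs = map (\<lambda>i. xs ! (\<alpha> i - 1)) [1..<Suc n]"

definition subst_rel :: "'w set \<Rightarrow> nat \<Rightarrow> nat \<Rightarrow> (nat \<Rightarrow> nat) \<Rightarrow> 'w list set \<Rightarrow> 'w list set" where
  "subst_rel W n k \<alpha> R = {xs \<in> tuples W k. subst_tuple n \<alpha> xs \<in> R}"

definition ex_rel :: "'w set \<Rightarrow> nat \<Rightarrow> 'w list set \<Rightarrow> 'w list set" where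
  "ex_rel W n R = {xs \<in> tuples W n. \<exists>y\<in>W. xs @ [y] \<in> R}"

definition almost_morphism :: "('a, 'b) pe_alg_scheme \<Rightarrow> 'w set \<Rightarrow> (nat \<Rightarrow> 'a \<Rightarrow> 'w list set) \<Rightarrow> bool" where
  "almost_morphism L W \<phi> \<longleftrightarrow>
     (\<forall>n. \<forall>r\<in>car L n. \<phi> n r \<subseteq> tuples W n) \<and>
     (\<forall>n k \<alpha>. \<alpha> \<in> substs n k \<longrightarrow> (\<forall>r\<in>car L n. \<phi> k (sb L n k \<alpha> r) = subst_rel W n k \<alpha> (\<phi> n r))) \<and>
     (\<forall>n. \<phi> n (zer L n) = {} \<and> \<phi> n (one L n) = tuples W n) \<and>
     (\<forall>n. \<forall>x\<in>car L n. \<forall>y\<in>car L n.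
        \<phi> n (jn L n x y) = \<phi> n x \<union> \<phi> n y \<and> \<phi> n (mt L n x y) = \<phi> n x \<inter> \<phi> n y) \<and>
     (\<forall>n. \<forall>r\<in>car L (Suc n). ex_rel W n (\<phi> (Suc n) r) \<subseteq> \<phi> n (ex L n r))"

end

theory Submission
  imports Defs
begin

lemma lindenbaum:
  fixes prov :: "'t list \<Rightarrow> 't list \<Rightarrow> bool" and S :: "'t set" and X0 :: "('t + 't) set"
  assumes weak: "\<And>A B A' B'. prov A B \<Longrightarrow> set A \<subseteq> set A' \<Longrightarrow> set B \<subseteq> set B' \<Longrightarrow> set A' \<subseteq> S \<Longrightarrow> set B' \<subseteq> S \<Longrightarrow> prov A' B'"
  and cut: "\<And>A B t. set A \<subseteq> S \<Longrightarrow> set B \<subseteq> S \<Longrightarrow> t \<in> S \<Longrightarrow> prov (t#A) B \<Longrightarrow> prov A (t#B) \<Longrightarrow> prov A B"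
  and X0S: "X0 \<subseteq> Inl ` S \<union> Inr ` S"
  and c0: "\<forall>A B. set A \<subseteq> {t. Inl t \<in> X0} \<longrightarrow> set B \<subseteq> {t. Inr t \<in> X0} \<longrightarrow> \<not> prov A B"
  shows "\<exists>X. X0 \<subseteq> X \<and> X \<subseteq> Inl ` S \<union> Inr ` S \<and>
     (\<forall>A B. set A \<subseteq> {t. Inl t \<in> X} \<longrightarrow> set B \<subseteq> {t. Inr t \<in> X} \<longrightarrow> \<not> prov A B) \<and>
     (\<forall>t\<in>S. Inl t \<in> X \<or> Inr t \<in> X)"
proof -
  define cons where "cons X \<longleftrightarrow> (\<forall>A B. set A \<subseteq> {t. Inl t \<in> X} \<longrightarrow> set B \<subseteq> {t. Inr t \<in> X} \<longrightarrow> \<not> prov A B)" for X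
  define F where "F = {X. X0 \<subseteq> X \<and> X \<subseteq> Inl ` S \<union> Inr ` S \<and> cons X}"
  have "X0 \<in> F" using X0S c0 by (auto simp: F_def cons_def)
  hence "F \<noteq> {}" by auto
  have "\<exists>M\<in>F. \<forall>X\<in>F. M \<subseteq> X \<longrightarrow> X = M"
  proof (rule subset_Zorn_nonempty[OF \<open>F \<noteq> {}\<close>])
    fix C assume Cne: "C \<noteq> {}" and ch: "subset.chain F C"
    have CF: "C \<subseteq> F" using ch by (auto simp: subset.chain_def)
    have "cons (\<Union>C)"
    proof (unfold cons_def, intro allI impI)
      fix A B assume a: "set A \<subseteq> {t. Inl t \<in> \<Union>C}" and b: "set B \<subseteq> {t. Inr t \<in> \<Union>C}"
      have "finite (Inl ` set A \<union> Inr ` set B)" by simp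
      moreover have "Inl ` set A \<union> Inr ` set B \<subseteq> \<Union>C" using a b by auto
      ultimately obtain Y where Y: "Y \<in> C" "Inl ` set A \<union> Inr ` set B \<subseteq> Y"
        using finite_subset_Union_chain[OF _ _ Cne ch] by metis
      hence "cons Y" using CF by (auto simp: F_def)
      moreover have "set A \<subseteq> {t. Inl t \<in> Y}" "set B \<subseteq> {t. Inr t \<in> Y}" using Y by auto
      ultimately show "\<not> prov A B" unfolding cons_def by blast
    qed
    thus "\<Union>C \<in> F" using CF Cne by (auto simp: F_def)
  qed
  then obtain M where MF: "M \<in> F" and Mmax: "\<forall>X\<in>F. M \<subseteq> X \<longrightarrow> X = M" by blast
  have MS: "M \<subseteq> Inl ` S \<union> Inr ` S" and consM: "cons M" using MF by (auto simp: F_def)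
  have tot: "Inl t \<in> M \<or> Inr t \<in> M" if tS: "t \<in> S" for t
  proof (rule ccontr)
    assume nt: "\<not> (Inl t \<in> M \<or> Inr t \<in> M)"
    have "\<not> cons (insert (Inl t) M)"
    proof
      assume "cons (insert (Inl t) M)"
      hence "insert (Inl t) M \<in> F" using MF tS by (auto simp: F_def)
      thus False using Mmax nt by auto
    qed
    then obtain A1 B1 where A1: "set A1 \<subseteq> {s. Inl s \<in> insert (Inl t) M}" and B1: "set B1 \<subseteq> {s. Inr s \<in> insert (Inl t) M}"
      and p1: "prov A1 B1" unfolding cons_def by blast
    have "\<not> cons (insert (Inr t) M)"
    proof
      assume "cons (insert (Inr t) M)"
      hence "insert (Inr t) M \<in> F" using MF tS by (auto simp: F_def)
      thus False using Mmax nt by auto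
    qed
    then obtain A2 B2 where A2: "set A2 \<subseteq> {s. Inl s \<in> insert (Inr t) M}" and B2: "set B2 \<subseteq> {s. Inr s \<in> insert (Inr t) M}"
      and p2: "prov A2 B2" unfolding cons_def by blast
    define A where "A = filter (\<lambda>a. Inl a \<in> M) (A1 @ A2)"
    define B where "B = filter (\<lambda>a. Inr a \<in> M) (B1 @ B2)"
    have AS: "set A \<subseteq> S" and BS: "set B \<subseteq> S" using MS by (auto simp: A_def B_def)
    have "prov (t#A) B" by (rule weak[OF p1]) (use A1 B1 AS BS tS in \<open>auto simp: A_def B_def\<close>)
    moreover have "prov A (t#B)" by (rule weak[OF p2]) (use A2 B2 AS BS tS in \<open>auto simp: A_def B_def\<close>)
    ultimately have "prov A B" using cut AS BS tS by blast
    moreover have "set A \<subseteq> {t. Inl t \<in> M}" "set B \<subseteq> {t. Inr t \<in> M}" by (auto simp: A_def B_def)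
    ultimately show False using consM by (auto simp: cons_def)
  qed
  show ?thesis using MF tot by (auto simp: F_def cons_def)
qed


locale pe =
  fixes L :: "('a, 'b) pe_alg_scheme"
  assumes alg: "pe_algebra L"
    and A0: "ax0 L" and A1: "ax1 L" and A2: "ax2 L" and A3: "ax3 L" and A4: "ax4 L" and A8: "ax8 L"
begin

lemma zer_car[simp]: "zer L n \<in> car L n" and one_car[simp]: "one L n \<in> car L n"
  using alg by (auto simp: pe_algebra_def)
lemma jn_car[simp]: "x \<in> car L n \<Longrightarrow> y \<in> car L n \<Longrightarrow> jn L n x y \<in> car L n"
  and mt_car[simp]: "x \<in> car L n \<Longrightarrow> y \<in> car L n \<Longrightarrow> mt L n x y \<in> car L n"
  using alg by (auto simp: pe_algebra_def)
lemma ex_car[simp]: "x \<in> car L (Suc n) \<Longrightarrow> ex L n x \<in> car L n"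
  using alg by (auto simp: pe_algebra_def)
lemma sb_car[simp]: "\<alpha> \<in> substs n k \<Longrightarrow> x \<in> car L n \<Longrightarrow> sb L n k \<alpha> x \<in> car L k"
  using alg by (auto simp: pe_algebra_def)

context fixes n :: nat begin
abbreviation "J \<equiv> jn L n"
abbreviation "M \<equiv> mt L n"
abbreviation "C \<equiv> car L n"
abbreviation "LE \<equiv> le L n"

lemma ax1E: "x \<in> C \<Longrightarrow> y \<in> C \<Longrightarrow> z \<in> C \<Longrightarrow>
      J x (J y z) = J (J x y) z \<and>
      M x (M y z) = M (M x y) z \<and>
      J x y = J y x \<and>
      M x y = M y x \<and>
      J x (M x y) = x \<and>
      M x (J x y) = x \<and>
      M x (J y z) = J (M x y) (M x z) \<and>
      J x (zer L n) = x \<and>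
      M x (one L n) = x"
  using A1 unfolding ax1_def by blast

lemma jn_assoc: "x \<in> C \<Longrightarrow> y \<in> C \<Longrightarrow> z \<in> C \<Longrightarrow> J x (J y z) = J (J x y) z" using ax1E[of x y z] by blast
lemma mt_assoc: "x \<in> C \<Longrightarrow> y \<in> C \<Longrightarrow> z \<in> C \<Longrightarrow> M x (M y z) = M (M x y) z" using ax1E[of x y z] by blast
lemma jn_comm: "x \<in> C \<Longrightarrow> y \<in> C \<Longrightarrow> J x y = J y x" using ax1E[of x y x] by blast
lemma mt_comm: "x \<in> C \<Longrightarrow> y \<in> C \<Longrightarrow> M x y = M y x" using ax1E[of x y x] by blast
lemma absorb1: "x \<in> C \<Longrightarrow> y \<in> C \<Longrightarrow> J x (M x y) = x" using ax1E[of x y x] by blast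
lemma absorb2: "x \<in> C \<Longrightarrow> y \<in> C \<Longrightarrow> M x (J x y) = x" using ax1E[of x y x] by blast
lemma distr: "x \<in> C \<Longrightarrow> y \<in> C \<Longrightarrow> z \<in> C \<Longrightarrow> M x (J y z) = J (M x y) (M x z)" using ax1E[of x y z] by blast
lemma jn_zer: "x \<in> C \<Longrightarrow> J x (zer L n) = x" using ax1E[of x x x] by blast
lemma mt_one: "x \<in> C \<Longrightarrow> M x (one L n) = x" using ax1E[of x x x] by blast

lemma mt_idem: "x \<in> C \<Longrightarrow> M x x = x"
proof -
  assume x: "x \<in> C"
  have "M x (J x (M x x)) = x" using x by (simp add: absorb2)
  moreover have "J x (M x x) = x" using x by (simp add: absorb1)
  ultimately show ?thesis by simp
qed

lemma le_refl: "x \<in> C \<Longrightarrow> LE x x" by (simp add: le_def mt_idem)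
lemma le_trans: "x \<in> C \<Longrightarrow> y \<in> C \<Longrightarrow> z \<in> C \<Longrightarrow> LE x y \<Longrightarrow> LE y z \<Longrightarrow> LE x z"
proof -
  assume c: "x \<in> C" "y \<in> C" "z \<in> C" and h: "LE x y" "LE y z"
  have 1: "M x y = x" "M y z = y" using h by (simp_all add: le_def)
  have "M x z = M (M x y) z" using 1 by simp
  also have "\<dots> = M x (M y z)" using c by (simp add: mt_assoc)
  also have "\<dots> = x" using 1 by simp
  finally show ?thesis by (simp add: le_def)
qed
lemma le_antisym: "x \<in> C \<Longrightarrow> y \<in> C \<Longrightarrow> LE x y \<Longrightarrow> LE y x \<Longrightarrow> x = y"
proof -
  assume c: "x \<in> C" "y \<in> C" and h: "LE x y" "LE y x"
  have 1: "M x y = x" "M y x = y" using h by (simp_all add: le_def)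
  thus ?thesis using mt_comm[OF c] by simp
qed
lemma mt_le1: "x \<in> C \<Longrightarrow> y \<in> C \<Longrightarrow> LE (M x y) x"
proof -
  assume c: "x \<in> C" "y \<in> C"
  have "M (M x y) x = M x (M x y)" using c by (simp add: mt_comm)
  also have "\<dots> = M (M x x) y" using c by (simp add: mt_assoc)
  also have "\<dots> = M x y" using c by (simp add: mt_idem)
  finally show ?thesis by (simp add: le_def)
qed
lemma mt_le2: "x \<in> C \<Longrightarrow> y \<in> C \<Longrightarrow> LE (M x y) y"
proof -
  assume c: "x \<in> C" "y \<in> C"
  have "M (M x y) y = M x (M y y)" using c by (simp add: mt_assoc)
  also have "\<dots> = M x y" using c by (simp add: mt_idem)
  finally show ?thesis by (simp add: le_def)
qed
lemma mt_glb: "x \<in> C \<Longrightarrow> y \<in> C \<Longrightarrow> z \<in> C \<Longrightarrow> LE z x \<Longrightarrow> LE z y \<Longrightarrow> LE z (M x y)"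
proof -
  assume c: "x \<in> C" "y \<in> C" "z \<in> C" and h: "LE z x" "LE z y"
  have 1: "M z x = z" "M z y = z" using h by (simp_all add: le_def)
  have "M z (M x y) = M (M z x) y" using c by (simp add: mt_assoc)
  also have "\<dots> = z" using 1 by simp
  finally show ?thesis by (simp add: le_def)
qed
lemma jn_ge1: "x \<in> C \<Longrightarrow> y \<in> C \<Longrightarrow> LE x (J x y)"
  unfolding le_def by (simp add: absorb2)
lemma jn_ge2: "x \<in> C \<Longrightarrow> y \<in> C \<Longrightarrow> LE y (J x y)"
  using jn_ge1[of y x] jn_comm[of x y] by simp
lemma jn_lub: "x \<in> C \<Longrightarrow> y \<in> C \<Longrightarrow> z \<in> C \<Longrightarrow> LE x z \<Longrightarrow> LE y z \<Longrightarrow> LE (J x y) z"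
proof -
  assume c: "x \<in> C" "y \<in> C" "z \<in> C" and h: "LE x z" "LE y z"
  have 1: "M x z = x" "M y z = y" using h by (simp_all add: le_def)
  have "M (J x y) z = M z (J x y)" using c by (simp add: mt_comm)
  also have "\<dots> = J (M z x) (M z y)" using c by (simp add: distr)
  also have "\<dots> = J x y" using 1 c by (simp add: mt_comm)
  finally show ?thesis by (simp add: le_def)
qed
lemma le_one: "x \<in> C \<Longrightarrow> LE x (one L n)" by (simp add: le_def mt_one)
lemma zer_jn: "x \<in> C \<Longrightarrow> J (zer L n) x = x" using jn_comm[of x "zer L n"] jn_zer[of x] by simp
lemma zer_mt: "x \<in> C \<Longrightarrow> M (zer L n) x = zer L n"
  using absorb2[of "zer L n" x] zer_jn[of x] by simp
lemma le_zer: "x \<in> C \<Longrightarrow> LE (zer L n) x" by (simp add: le_def zer_mt)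
lemma one_mt: "x \<in> C \<Longrightarrow> M (one L n) x = x" using mt_comm[of x "one L n"] mt_one[of x] by simp
lemma le_mt_iff: "x \<in> C \<Longrightarrow> y \<in> C \<Longrightarrow> z \<in> C \<Longrightarrow> LE z (M x y) \<longleftrightarrow> LE z x \<and> LE z y"
  by (meson le_trans mt_car mt_glb mt_le1 mt_le2)
lemma jn_le_iff: "x \<in> C \<Longrightarrow> y \<in> C \<Longrightarrow> z \<in> C \<Longrightarrow> LE (J x y) z \<longleftrightarrow> LE x z \<and> LE y z"
  by (meson le_trans jn_car jn_lub jn_ge1 jn_ge2)
lemma lat_cut: "a \<in> C \<Longrightarrow> b \<in> C \<Longrightarrow> t \<in> C \<Longrightarrow> LE (M a t) b \<Longrightarrow> LE a (J b t) \<Longrightarrow> LE a b"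
proof -
  assume c: "a \<in> C" "b \<in> C" "t \<in> C" and h1: "LE (M a t) b" and h2: "LE a (J b t)"
  have "a = M a (J b t)" using h2 by (simp add: le_def)
  also have "\<dots> = J (M a b) (M a t)" using c by (simp add: distr)
  finally have e: "a = J (M a b) (M a t)" .
  have "LE (J (M a b) (M a t)) b" using c h1 by (simp add: jn_lub mt_le2)
  thus ?thesis using e by simp
qed

lemma meets_car: "(\<And>i. i < m \<Longrightarrow> f i \<in> C) \<Longrightarrow> meets L n f m \<in> C"
proof (induction m)
  case 0 show ?case by simp
next
  case (Suc m)
  have "meets L n f m \<in> C" using Suc by simp
  moreover have "f m \<in> C" using Suc by simp
  ultimately show ?case by simp
qed
lemma joins_car: "(\<And>i. i < m \<Longrightarrow> f i \<in> C) \<Longrightarrow> joins L n f m \<in> C"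
proof (induction m)
  case 0 show ?case by simp
next
  case (Suc m)
  have "joins L n f m \<in> C" using Suc by simp
  moreover have "f m \<in> C" using Suc by simp
  ultimately show ?case by simp
qed
lemma le_meets_iff: "(\<And>i. i < m \<Longrightarrow> f i \<in> C) \<Longrightarrow> c \<in> C \<Longrightarrow> LE c (meets L n f m) \<longleftrightarrow> (\<forall>i<m. LE c (f i))"
proof (induction m)
  case 0 thus ?case by (simp add: le_one)
next
  case (Suc m)
  have a: "meets L n f m \<in> C" "f m \<in> C" using Suc.prems by (auto intro: meets_car)
  have "LE c (meets L n f (Suc m)) \<longleftrightarrow> LE c (meets L n f m) \<and> LE c (f m)"
    using le_mt_iff[OF a Suc.prems(2)] by simp
  also have "\<dots> \<longleftrightarrow> (\<forall>i<m. LE c (f i)) \<and> LE c (f m)" using Suc by simp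
  also have "\<dots> \<longleftrightarrow> (\<forall>i<Suc m. LE c (f i))" by (auto simp: less_Suc_eq)
  finally show ?case .
qed
lemma joins_le_iff: "(\<And>i. i < m \<Longrightarrow> f i \<in> C) \<Longrightarrow> c \<in> C \<Longrightarrow> LE (joins L n f m) c \<longleftrightarrow> (\<forall>i<m. LE (f i) c)"
proof (induction m)
  case 0 thus ?case by (simp add: le_zer)
next
  case (Suc m)
  have a: "joins L n f m \<in> C" "f m \<in> C" using Suc.prems by (auto intro: joins_car)
  have "LE (joins L n f (Suc m)) c \<longleftrightarrow> LE (joins L n f m) c \<and> LE (f m) c"
    using jn_le_iff[OF a Suc.prems(2)] by simp
  also have "\<dots> \<longleftrightarrow> (\<forall>i<m. LE (f i) c) \<and> LE (f m) c" using Suc by simp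
  also have "\<dots> \<longleftrightarrow> (\<forall>i<Suc m. LE (f i) c)" by (auto simp: less_Suc_eq)
  finally show ?case .
qed
end

end

definition pos :: "'v list \<Rightarrow> 'v \<Rightarrow> nat" where
  "pos w v = (THE i. i < length w \<and> w ! i = v)"

definition idx :: "'v list \<Rightarrow> 'v list \<Rightarrow> (nat \<Rightarrow> nat)" where
  "idx w x = (\<lambda>j\<in>{1..length x}. pos w (x ! (j - 1)) + 1)"

lemma pos_nth: "distinct w \<Longrightarrow> i < length w \<Longrightarrow> pos w (w ! i) = i"
  unfolding pos_def by (rule the_equality) (auto simp: nth_eq_iff_index_eq)

lemma pos_in: "distinct w \<Longrightarrow> v \<in> set w \<Longrightarrow> pos w v < length w \<and> w ! pos w v = v"
  by (metis in_set_conv_nth pos_nth)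

lemma idx_substs: "distinct w \<Longrightarrow> set x \<subseteq> set w \<Longrightarrow> idx w x \<in> substs (length x) (length w)"
proof -
  assume d: "distinct w" and s: "set x \<subseteq> set w"
  have "pos w (x ! (j - 1)) < length w" if "j \<in> {1..length x}" for j
  proof -
    have "x ! (j - 1) \<in> set w" using that s by (auto simp: nth_mem subsetD)
    thus ?thesis using pos_in[OF d] by blast
  qed
  hence "pos w (x ! (j - 1)) + 1 \<in> {1..length w}" if "j \<in> {1..length x}" for j
    using that by fastforce
  thus ?thesis by (auto simp: idx_def substs_def PiE_def)
qed

lemma idx_comp: "distinct w \<Longrightarrow> distinct u \<Longrightarrow> set x \<subseteq> set w \<Longrightarrow> set w \<subseteq> set u \<Longrightarrow>
   scomp (length x) (idx u w) (idx w x) = idx u x"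
proof -
  assume d: "distinct w" "distinct u" and s: "set x \<subseteq> set w" "set w \<subseteq> set u"
  show ?thesis unfolding scomp_def
  proof (rule ext)
    fix j show "(\<lambda>i\<in>{1..length x}. idx u w (idx w x i)) j = idx u x j"
    proof (cases "j \<in> {1..length x}")
      case True
      have m: "x ! (j - 1) \<in> set w" using True s by (auto simp: nth_mem subsetD)
      define p where "p = pos w (x ! (j - 1))"
      from pos_in[OF d(1) m] have p: "p < length w" "w ! p = x ! (j - 1)" by (auto simp: p_def)
      have e1: "idx w x j = p + 1" using True by (simp add: idx_def p_def)
      have e2: "idx u w (p + 1) = pos u (x ! (j - 1)) + 1"
        using p by (simp add: idx_def)
      have e3: "idx u x j = pos u (x ! (j - 1)) + 1" using True by (simp add: idx_def)
      show ?thesis using True e1 e2 e3 by simp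
    next
      case False thus ?thesis by (auto simp: idx_def)
    qed
  qed
qed

lemma length_subst_tuple[simp]: "length (subst_tuple n \<alpha> x) = n"
  by (simp add: subst_tuple_def)

lemma subst_tuple_nth: "j \<in> {1..n} \<Longrightarrow> subst_tuple n \<alpha> x ! (j - 1) = x ! (\<alpha> j - 1)"
  by (auto simp del: upt_Suc simp: subst_tuple_def nth_map)

lemma set_subst_tuple: "\<alpha> \<in> substs n k \<Longrightarrow> length x = k \<Longrightarrow> set (subst_tuple n \<alpha> x) \<subseteq> set x"
proof
  fix v assume a: "\<alpha> \<in> substs n k" "length x = k" and v: "v \<in> set (subst_tuple n \<alpha> x)"
  have "v \<in> (\<lambda>i. x ! (\<alpha> i - 1)) ` {1..<Suc n}" using v by (simp del: upt_Suc add: subst_tuple_def)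
  then obtain j where j0: "j \<in> {1..<Suc n}" "v = x ! (\<alpha> j - 1)" by blast
  hence j: "j \<in> {1..n}" "v = x ! (\<alpha> j - 1)" by auto
  have "\<alpha> j \<in> {1..k}" using a j by (auto simp: substs_def)
  thus "v \<in> set x" using j a by auto
qed

lemma idx_subst: "distinct w \<Longrightarrow> set x \<subseteq> set w \<Longrightarrow> length x = k \<Longrightarrow> \<alpha> \<in> substs n k \<Longrightarrow>
   scomp n (idx w x) \<alpha> = idx w (subst_tuple n \<alpha> x)"
proof -
  assume d: "distinct w" and s: "set x \<subseteq> set w" and l: "length x = k" and a: "\<alpha> \<in> substs n k"
  show ?thesis unfolding scomp_def
  proof (rule ext)
    fix j show "(\<lambda>i\<in>{1..n}. idx w x (\<alpha> i)) j = idx w (subst_tuple n \<alpha> x) j"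
    proof (cases "j \<in> {1..n}")
      case True
      have aj: "\<alpha> j \<in> {1..k}" using a True by (auto simp: substs_def)
      have st: "subst_tuple n \<alpha> x ! (j - 1) = x ! (\<alpha> j - 1)" by (rule subst_tuple_nth[OF True])
      have "idx w (subst_tuple n \<alpha> x) j = pos w (subst_tuple n \<alpha> x ! (j - 1)) + 1"
        using True unfolding idx_def length_subst_tuple by (rule restrict_apply')
      also have "\<dots> = pos w (x ! (\<alpha> j - 1)) + 1" using st by simp
      also have "\<dots> = idx w x (\<alpha> j)" using aj l unfolding idx_def by simp
      finally show ?thesis using True by simp
    next
      case False thus ?thesis by (auto simp: idx_def)
    qed
  qed
qed

lemma concat_nth: "i < length bs \<Longrightarrow> m < length (bs ! i) \<Longrightarrow>
   concat bs ! ((\<Sum>j<i. length (bs ! j)) + m) = bs ! i ! m"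
proof (induction bs arbitrary: i)
  case Nil thus ?case by simp
next
  case (Cons b bs)
  show ?case
  proof (cases i)
    case 0 thus ?thesis using Cons by (simp add: nth_append)
  next
    case (Suc i')
    have "(\<Sum>j<i. length ((b#bs) ! j)) = length b + (\<Sum>j<i'. length (bs ! j))"
      unfolding Suc sum.lessThan_Suc_shift by simp
    thus ?thesis using Cons Suc by (simp add: nth_append)
  qed
qed

lemma length_concat_sum: "length (concat bs) = (\<Sum>j<length bs. length (bs ! j))"
  by (simp add: length_concat sum_list_sum_nth atLeast0LessThan)

lemma sum_le_length_concat: "i < length bs \<Longrightarrow> m < length (bs ! i) \<Longrightarrow>
   (\<Sum>j<i. length (bs ! j)) + m < length (concat bs)"
proof -
  assume a: "i < length bs" "m < length (bs ! i)"
  have "(\<Sum>j<i. length (bs ! j)) + m < (\<Sum>j<Suc i. length (bs ! j))" using a by simp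
  also have "\<dots> \<le> (\<Sum>j<length bs. length (bs ! j))"
    using a by (intro sum_mono2) auto
  finally show ?thesis by (simp add: length_concat_sum)
qed

lemma idx_concat: "distinct (concat bs) \<Longrightarrow> i < length bs \<Longrightarrow>
   idx (concat bs) (bs ! i) = pcyl (\<lambda>j. length (bs ! j)) i"
proof (rule ext)
  fix l assume d: "distinct (concat bs)" and i: "i < length bs"
  show "idx (concat bs) (bs ! i) l = pcyl (\<lambda>j. length (bs ! j)) i l"
  proof (cases "l \<in> {1..length (bs ! i)}")
    case True
    hence m: "l - 1 < length (bs ! i)" by auto
    have "pos (concat bs) (bs ! i ! (l - 1)) = (\<Sum>j<i. length (bs ! j)) + (l - 1)"
      using concat_nth[OF i m] pos_nth[OF d sum_le_length_concat[OF i m]] by simp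
    thus ?thesis using True by (simp add: idx_def pcyl_def)
  next
    case False thus ?thesis by (auto simp: idx_def pcyl_def)
  qed
qed


definition enc :: "nat \<Rightarrow> 'a \<Rightarrow> 'a \<Rightarrow> nat \<Rightarrow> (nat \<times> 'a) set set" where
  "enc n r s j = {{(n, r)}, {(n, r), (j, s)}}"

lemma enc_inj: "enc n r s j = enc n' r' s' j' \<Longrightarrow> n = n' \<and> r = r' \<and> s = s' \<and> j = j'"
  unfolding enc_def by (auto simp: doubleton_eq_iff insert_eq_iff)

definition blk :: "nat \<times> 'a \<times> 'a \<Rightarrow> (nat \<times> 'a) set set list" where
  "blk p = (case p of (n, r, s) \<Rightarrow> map (enc n r s) [1..<Suc n])"

lemma length_blk[simp]: "length (blk (n, r, s)) = n" by (simp add: blk_def)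

lemma distinct_blk: "distinct (blk p)"
  by (cases p) (auto simp: blk_def distinct_map inj_on_def dest: enc_inj)

lemma blk_disj: "p \<noteq> q \<Longrightarrow> set (blk p) \<inter> set (blk q) = {}"
  by (cases p; cases q) (auto simp: blk_def dest: enc_inj)

lemma distinct_concat_blk: "distinct Q \<Longrightarrow> distinct (concat (map blk Q))"
proof (induction Q)
  case Nil thus ?case by simp
next
  case (Cons q Q)
  have qn: "q \<notin> set Q" using Cons.prems by simp
  have "\<forall>q'\<in>set Q. set (blk q) \<inter> set (blk q') = {}"
  proof
    fix q' assume "q' \<in> set Q" hence "q \<noteq> q'" using qn by auto
    thus "set (blk q) \<inter> set (blk q') = {}" by (rule blk_disj)
  qed
  hence "set (blk q) \<inter> set (concat (map blk Q)) = {}" by auto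
  thus ?case using Cons distinct_blk by simp
qed

context pe begin

lemma sb_zer: "\<alpha> \<in> substs n k \<Longrightarrow> sb L n k \<alpha> (zer L n) = zer L k" using A2 by (simp add: ax2_def)
lemma sb_one: "\<alpha> \<in> substs n k \<Longrightarrow> sb L n k \<alpha> (one L n) = one L k" using A2 by (simp add: ax2_def)
lemma sb_jn: "\<alpha> \<in> substs n k \<Longrightarrow> x \<in> car L n \<Longrightarrow> y \<in> car L n \<Longrightarrow> sb L n k \<alpha> (jn L n x y) = jn L k (sb L n k \<alpha> x) (sb L n k \<alpha> y)"
  using A2 unfolding ax2_def by blast
lemma sb_mt: "\<alpha> \<in> substs n k \<Longrightarrow> x \<in> car L n \<Longrightarrow> y \<in> car L n \<Longrightarrow> sb L n k \<alpha> (mt L n x y) = mt L k (sb L n k \<alpha> x) (sb L n k \<alpha> y)"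
  using A2 unfolding ax2_def by blast
lemma sb_comp: "\<alpha> \<in> substs k n \<Longrightarrow> \<beta> \<in> substs n m \<Longrightarrow> r \<in> car L k \<Longrightarrow> sb L k m (scomp k \<beta> \<alpha>) r = sb L n m \<beta> (sb L k n \<alpha> r)"
  using A3 unfolding ax3_def by blast

lemma sb_le: "\<alpha> \<in> substs n k \<Longrightarrow> x \<in> car L n \<Longrightarrow> y \<in> car L n \<Longrightarrow> le L n x y \<Longrightarrow> le L k (sb L n k \<alpha> x) (sb L n k \<alpha> y)"
  unfolding le_def by (metis sb_mt)

lemma sb_meets: "\<alpha> \<in> substs n k \<Longrightarrow> (\<And>i. i < m \<Longrightarrow> f i \<in> car L n) \<Longrightarrow>
   sb L n k \<alpha> (meets L n f m) = meets L k (\<lambda>i. sb L n k \<alpha> (f i)) m"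
proof (induction m)
  case 0 thus ?case by (simp add: sb_one)
next
  case (Suc m)
  have "meets L n f m \<in> car L n" using Suc.prems by (intro meets_car) auto
  thus ?case using Suc by (simp add: sb_mt)
qed

lemma sb_joins: "\<alpha> \<in> substs n k \<Longrightarrow> (\<And>i. i < m \<Longrightarrow> f i \<in> car L n) \<Longrightarrow>
   sb L n k \<alpha> (joins L n f m) = joins L k (\<lambda>i. sb L n k \<alpha> (f i)) m"
proof (induction m)
  case 0 thus ?case by (simp add: sb_zer)
next
  case (Suc m)
  have "joins L n f m \<in> car L n" using Suc.prems by (intro joins_car) auto
  thus ?case using Suc by (simp add: sb_jn)
qed

lemma meets_cong: "(\<And>i. i < m \<Longrightarrow> f i = g i) \<Longrightarrow> meets L n f m = meets L n g m"
  by (induction m) auto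
lemma joins_cong: "(\<And>i. i < m \<Longrightarrow> f i = g i) \<Longrightarrow> joins L n f m = joins L n g m"
  by (induction m) auto

definition Sep :: "(nat \<times> 'a \<times> 'a) set" where
  "Sep = {(n, r, s). r \<in> car L n \<and> s \<in> car L n \<and> \<not> le L n r s}"

definition V :: "(nat \<times> 'a) set set set" where
  "V = (\<Union>p\<in>Sep. set (blk p))"

definition S :: "(nat \<times> (nat \<times> 'a) set set list \<times> 'a) set" where
  "S = {(n, x, r). length x = n \<and> set x \<subseteq> V \<and> r \<in> car L n}"

definition vs :: "(nat \<times> (nat \<times> 'a) set set list \<times> 'a) \<Rightarrow> (nat \<times> 'a) set set set" where
  "vs t = set (fst (snd t))"

definition tau :: "(nat \<times> 'a) set set list \<Rightarrow> (nat \<times> (nat \<times> 'a) set set list \<times> 'a) \<Rightarrow> 'a" where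
  "tau w t = sb L (fst t) (length w) (idx w (fst (snd t))) (snd (snd t))"

definition MA where "MA w A = meets L (length w) (\<lambda>i. tau w (A ! i)) (length A)"
definition JB where "JB w B = joins L (length w) (\<lambda>i. tau w (B ! i)) (length B)"

definition provw where
  "provw w A B \<longleftrightarrow> distinct w \<and> set w \<subseteq> V \<and> (\<forall>t\<in>set A \<union> set B. vs t \<subseteq> set w) \<and>
     le L (length w) (MA w A) (JB w B)"

definition prov where "prov A B \<longleftrightarrow> (\<exists>w. provw w A B)"

lemma tau_car: "distinct w \<Longrightarrow> t \<in> S \<Longrightarrow> vs t \<subseteq> set w \<Longrightarrow> tau w t \<in> car L (length w)"
  unfolding tau_def S_def vs_def using idx_substs by fastforce

lemma MA_car: "distinct w \<Longrightarrow> set A \<subseteq> S \<Longrightarrow> (\<forall>t\<in>set A. vs t \<subseteq> set w) \<Longrightarrow> MA w A \<in> car L (length w)"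
  unfolding MA_def by (intro meets_car tau_car) (auto simp: nth_mem subsetD)
lemma JB_car: "distinct w \<Longrightarrow> set B \<subseteq> S \<Longrightarrow> (\<forall>t\<in>set B. vs t \<subseteq> set w) \<Longrightarrow> JB w B \<in> car L (length w)"
  unfolding JB_def by (intro joins_car tau_car) (auto simp: nth_mem subsetD)

lemma S_vs: "t \<in> S \<Longrightarrow> vs t \<subseteq> V" by (cases t) (auto simp: S_def vs_def)

lemma le_MA_iff: "distinct w \<Longrightarrow> set A \<subseteq> S \<Longrightarrow> (\<forall>t\<in>set A. vs t \<subseteq> set w) \<Longrightarrow> c \<in> car L (length w) \<Longrightarrow>
   le L (length w) c (MA w A) \<longleftrightarrow> (\<forall>a\<in>set A. le L (length w) c (tau w a))"
proof -
  assume d: "distinct w" and A: "set A \<subseteq> S" and cv: "\<forall>t\<in>set A. vs t \<subseteq> set w" and c: "c \<in> car L (length w)"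
  have f: "tau w (A ! i) \<in> car L (length w)" if "i < length A" for i
  proof -
    have "A ! i \<in> set A" using that by simp
    thus ?thesis using A cv d by (intro tau_car) auto
  qed
  have "le L (length w) c (MA w A) \<longleftrightarrow> (\<forall>i<length A. le L (length w) c (tau w (A ! i)))"
    unfolding MA_def using le_meets_iff[OF f c] by simp
  also have "\<dots> \<longleftrightarrow> (\<forall>a\<in>set A. le L (length w) c (tau w a))" by (metis in_set_conv_nth)
  finally show ?thesis .
qed
lemma JB_le_iff: "distinct w \<Longrightarrow> set B \<subseteq> S \<Longrightarrow> (\<forall>t\<in>set B. vs t \<subseteq> set w) \<Longrightarrow> c \<in> car L (length w) \<Longrightarrow>
   le L (length w) (JB w B) c \<longleftrightarrow> (\<forall>b\<in>set B. le L (length w) (tau w b) c)"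
proof -
  assume d: "distinct w" and A: "set B \<subseteq> S" and cv: "\<forall>t\<in>set B. vs t \<subseteq> set w" and c: "c \<in> car L (length w)"
  have f: "tau w (B ! i) \<in> car L (length w)" if "i < length B" for i
  proof -
    have "B ! i \<in> set B" using that by simp
    thus ?thesis using A cv d by (intro tau_car) auto
  qed
  have "le L (length w) (JB w B) c \<longleftrightarrow> (\<forall>i<length B. le L (length w) (tau w (B ! i)) c)"
    unfolding JB_def using joins_le_iff[OF f c] by simp
  also have "\<dots> \<longleftrightarrow> (\<forall>b\<in>set B. le L (length w) (tau w b) c)" by (metis in_set_conv_nth)
  finally show ?thesis .
qed

lemma tau_lift: "distinct w \<Longrightarrow> distinct u \<Longrightarrow> set w \<subseteq> set u \<Longrightarrow> t \<in> S \<Longrightarrow> vs t \<subseteq> set w \<Longrightarrow>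
   tau u t = sb L (length w) (length u) (idx u w) (tau w t)"
proof -
  assume d: "distinct w" "distinct u" and s: "set w \<subseteq> set u" and t: "t \<in> S" and v: "vs t \<subseteq> set w"
  obtain n x r where tt: "t = (n, x, r)" by (cases t) auto
  have n: "length x = n" and r: "r \<in> car L n" using t tt by (auto simp: S_def)
  have vx: "set x \<subseteq> set w" using v tt by (simp add: vs_def)
  have a1: "idx w x \<in> substs n (length w)" using idx_substs[OF d(1) vx] n by simp
  have a2: "idx u w \<in> substs (length w) (length u)" using idx_substs[OF d(2) s] .
  have "tau u t = sb L n (length u) (idx u x) r" by (simp add: tau_def tt)
  also have "idx u x = scomp n (idx u w) (idx w x)" using idx_comp[OF d vx s] n by simp
  also have "sb L n (length u) (scomp n (idx u w) (idx w x)) r = sb L (length w) (length u) (idx u w) (sb L n (length w) (idx w x) r)"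
    by (rule sb_comp[OF a1 a2 r])
  finally show ?thesis by (simp add: tau_def tt)
qed

lemma provw_lift: "provw w A B \<Longrightarrow> distinct u \<Longrightarrow> set u \<subseteq> V \<Longrightarrow> set w \<subseteq> set u \<Longrightarrow> set A \<subseteq> S \<Longrightarrow> set B \<subseteq> S \<Longrightarrow> provw u A B"
proof -
  assume p: "provw w A B" and u: "distinct u" "set u \<subseteq> V" "set w \<subseteq> set u" and AB: "set A \<subseteq> S" "set B \<subseteq> S"
  have d: "distinct w" and cov: "\<forall>t\<in>set A \<union> set B. vs t \<subseteq> set w" and le0: "le L (length w) (MA w A) (JB w B)"
    using p by (auto simp: provw_def)
  have a2: "idx u w \<in> substs (length w) (length u)" using idx_substs[OF u(1) u(3)] .
  have hA: "A ! i \<in> S" "vs (A ! i) \<subseteq> set w" if "i < length A" for i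
    using that AB cov nth_mem by blast+
  have hB: "B ! i \<in> S" "vs (B ! i) \<subseteq> set w" if "i < length B" for i
    using that AB cov nth_mem by blast+
  have "MA u A = sb L (length w) (length u) (idx u w) (MA w A)"
    unfolding MA_def
    by (subst sb_meets[OF a2]) (auto intro!: meets_cong tau_lift tau_car d u hA)
  moreover have "JB u B = sb L (length w) (length u) (idx u w) (JB w B)"
    unfolding JB_def
    by (subst sb_joins[OF a2]) (auto intro!: joins_cong tau_lift tau_car d u hB)
  moreover have "MA w A \<in> car L (length w)" "JB w B \<in> car L (length w)"
    using d AB cov by (auto intro!: MA_car JB_car)
  ultimately have "le L (length u) (MA u A) (JB u B)" using sb_le[OF a2 _ _ le0] by simp
  thus ?thesis using u cov by (auto simp: provw_def)
qed

lemma ext_list: "distinct w \<Longrightarrow> set w \<subseteq> V \<Longrightarrow> set ys \<subseteq> V \<Longrightarrow>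
   distinct (w @ filter (\<lambda>v. v \<notin> set w) (remdups ys)) \<and> set (w @ filter (\<lambda>v. v \<notin> set w) (remdups ys)) = set w \<union> set ys
   \<and> set (w @ filter (\<lambda>v. v \<notin> set w) (remdups ys)) \<subseteq> V"
  by auto

definition tvars where "tvars T = concat (map (\<lambda>t. fst (snd t)) T)"

lemma tvars_set: "set (tvars T) = (\<Union>t\<in>set T. vs t)" by (auto simp: tvars_def vs_def)
lemma tvars_V: "set T \<subseteq> S \<Longrightarrow> set (tvars T) \<subseteq> V" unfolding tvars_set using S_vs by blast

lemma weaken: "prov A B \<Longrightarrow> set A \<subseteq> set A' \<Longrightarrow> set B \<subseteq> set B' \<Longrightarrow> set A' \<subseteq> S \<Longrightarrow> set B' \<subseteq> S \<Longrightarrow> prov A' B'"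
proof -
  assume p: "prov A B" and s: "set A \<subseteq> set A'" "set B \<subseteq> set B'" "set A' \<subseteq> S" "set B' \<subseteq> S"
  then obtain w where pw: "provw w A B" by (auto simp: prov_def)
  have d: "distinct w" "set w \<subseteq> V" using pw by (auto simp: provw_def)
  define u where "u = w @ filter (\<lambda>v. v \<notin> set w) (remdups (tvars (A' @ B')))"
  have u: "distinct u" "set u = set w \<union> set (tvars (A' @ B'))" "set u \<subseteq> V"
    using ext_list[OF d tvars_V[of "A' @ B'"]] s by (auto simp: u_def)
  have cov: "\<forall>t\<in>set A' \<union> set B'. vs t \<subseteq> set u" using u(2) by (auto simp: tvars_set)
  have pu: "provw u A B" by (rule provw_lift[OF pw u(1) u(3)]) (use u s in auto)
  have le1: "le L (length u) (MA u A) (JB u B)" using pu by (simp add: provw_def)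
  have A'S: "set A' \<subseteq> S" and B'S: "set B' \<subseteq> S" using s by auto
  have c: "MA u A' \<in> car L (length u)" "MA u A \<in> car L (length u)" "JB u B \<in> car L (length u)" "JB u B' \<in> car L (length u)"
    using u cov s by (auto intro!: MA_car JB_car)
  have AS: "set A \<subseteq> S" and BS: "set B \<subseteq> S" using s by auto
  have cA: "\<forall>t\<in>set A. vs t \<subseteq> set u" "\<forall>t\<in>set A'. vs t \<subseteq> set u"
    and cB: "\<forall>t\<in>set B. vs t \<subseteq> set u" "\<forall>t\<in>set B'. vs t \<subseteq> set u" using cov s by auto
  have "le L (length u) (MA u A') (MA u A)"
    using le_MA_iff[OF u(1) AS cA(1) c(1)] le_MA_iff[OF u(1) A'S cA(2) c(1)] le_refl[OF c(1)] s by auto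
  moreover have "le L (length u) (JB u B) (JB u B')"
    using JB_le_iff[OF u(1) BS cB(1) c(4)] JB_le_iff[OF u(1) B'S cB(2) c(4)] le_refl[OF c(4)] s by auto
  ultimately have "le L (length u) (MA u A') (JB u B')"
    using le1 c by (meson le_trans)
  hence "provw u A' B'" using u cov by (simp add: provw_def)
  thus ?thesis by (auto simp: prov_def)
qed

end

context pe begin

lemma cut: "set A \<subseteq> S \<Longrightarrow> set B \<subseteq> S \<Longrightarrow> t \<in> S \<Longrightarrow> prov (t#A) B \<Longrightarrow> prov A (t#B) \<Longrightarrow> prov A B"
proof -
  assume AS: "set A \<subseteq> S" and BS: "set B \<subseteq> S" and tS: "t \<in> S" and p1: "prov (t#A) B" and p2: "prov A (t#B)"
  obtain w1 where w1: "provw w1 (t#A) B" using p1 by (auto simp: prov_def)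
  obtain w2 where w2: "provw w2 A (t#B)" using p2 by (auto simp: prov_def)
  have d1: "distinct w1" "set w1 \<subseteq> V" using w1 by (auto simp: provw_def)
  have d2: "set w2 \<subseteq> V" using w2 by (auto simp: provw_def)
  define u where "u = w1 @ filter (\<lambda>v. v \<notin> set w1) (remdups w2)"
  have u: "distinct u" "set u = set w1 \<union> set w2" "set u \<subseteq> V"
    using ext_list[OF d1 d2] by (auto simp: u_def)
  have pu1: "provw u (t#A) B" by (rule provw_lift[OF w1 u(1) u(3)]) (use u AS BS tS in auto)
  have pu2: "provw u A (t#B)" by (rule provw_lift[OF w2 u(1) u(3)]) (use u AS BS tS in auto)
  have covA: "\<forall>x\<in>set A. vs x \<subseteq> set u" and covB: "\<forall>x\<in>set B. vs x \<subseteq> set u" and covt: "vs t \<subseteq> set u"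
    using pu1 by (auto simp: provw_def)
  define N where "N = length u"
  define a where "a = MA u A"
  define b where "b = JB u B"
  define \<tau> where "\<tau> = tau u t"
  have c: "a \<in> car L N" "b \<in> car L N" "\<tau> \<in> car L N"
    using MA_car[OF u(1) AS covA] JB_car[OF u(1) BS covB] tau_car[OF u(1) tS covt]
    by (auto simp: a_def b_def \<tau>_def N_def)
  have tAS: "set (t#A) \<subseteq> S" and tBS: "set (t#B) \<subseteq> S" using AS BS tS by auto
  have covtA: "\<forall>x\<in>set (t#A). vs x \<subseteq> set u" and covtB: "\<forall>x\<in>set (t#B). vs x \<subseteq> set u" using covA covB covt by auto
  have ctA: "MA u (t#A) \<in> car L N" "JB u (t#B) \<in> car L N"
    using MA_car[OF u(1) tAS covtA] JB_car[OF u(1) tBS covtB] by (auto simp: N_def)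
  have aA: "\<forall>x\<in>set A. le L N a (tau u x)"
    using le_MA_iff[OF u(1) AS covA c(1)[unfolded N_def]] le_refl[OF c(1)] by (simp add: a_def N_def)
  have bB: "\<forall>x\<in>set B. le L N (tau u x) b"
    using JB_le_iff[OF u(1) BS covB c(2)[unfolded N_def]] le_refl[OF c(2)] by (simp add: b_def N_def)
  have mc: "mt L N a \<tau> \<in> car L N" "jn L N b \<tau> \<in> car L N" using c by auto
  have "\<forall>x\<in>set (t#A). le L N (mt L N a \<tau>) (tau u x)"
  proof
    fix x assume x: "x \<in> set (t#A)"
    show "le L N (mt L N a \<tau>) (tau u x)"
    proof (cases "x = t")
      case True thus ?thesis using mt_le2[OF c(1) c(3)] by (simp add: \<tau>_def)
    next
      case False
      hence xA: "x \<in> set A" using x by simp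
      have "tau u x \<in> car L N" using tau_car[OF u(1), of x] xA AS covA by (auto simp: N_def)
      thus ?thesis using le_trans[OF mc(1) c(1) _ mt_le1[OF c(1) c(3)]] aA xA by blast
    qed
  qed
  hence l1: "le L N (mt L N a \<tau>) (MA u (t#A))"
    using le_MA_iff[OF u(1) tAS covtA mc(1)[unfolded N_def]] by (simp add: N_def)
  have "\<forall>x\<in>set (t#B). le L N (tau u x) (jn L N b \<tau>)"
  proof
    fix x assume x: "x \<in> set (t#B)"
    show "le L N (tau u x) (jn L N b \<tau>)"
    proof (cases "x = t")
      case True thus ?thesis using jn_ge2[OF c(2) c(3)] by (simp add: \<tau>_def)
    next
      case False
      hence xB: "x \<in> set B" using x by simp
      have "tau u x \<in> car L N" using tau_car[OF u(1), of x] xB BS covB by (auto simp: N_def)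
      thus ?thesis using le_trans[OF _ c(2) mc(2) _ jn_ge1[OF c(2) c(3)]] bB xB by blast
    qed
  qed
  hence l2: "le L N (JB u (t#B)) (jn L N b \<tau>)"
    using JB_le_iff[OF u(1) tBS covtB mc(2)[unfolded N_def]] by (simp add: N_def)
  have h1: "le L N (MA u (t#A)) b" using pu1 by (simp add: provw_def b_def N_def)
  have h2: "le L N a (JB u (t#B))" using pu2 by (simp add: provw_def a_def N_def)
  have "le L N (mt L N a \<tau>) b" using le_trans[OF mc(1) ctA(1) c(2) l1 h1] .
  moreover have "le L N a (jn L N b \<tau>)" using le_trans[OF c(1) ctA(2) mc(2) h2 l2] .
  ultimately have "le L N a b" using lat_cut[OF c] by blast
  moreover have "\<forall>x\<in>set A \<union> set B. vs x \<subseteq> set u" using covA covB by blast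
  ultimately have "provw u A B" using u by (simp add: provw_def a_def b_def N_def)
  thus ?thesis by (auto simp: prov_def)
qed

definition X0 :: "((nat \<times> (nat \<times> 'a) set set list \<times> 'a) + (nat \<times> (nat \<times> 'a) set set list \<times> 'a)) set" where
  "X0 = {Inl (fst p, blk p, fst (snd p)) | p. p \<in> Sep} \<union> {Inr (fst p, blk p, snd (snd p)) | p. p \<in> Sep}"

lemma blk_V: "p \<in> Sep \<Longrightarrow> set (blk p) \<subseteq> V" by (auto simp: V_def)

lemma X0S: "X0 \<subseteq> Inl ` S \<union> Inr ` S"
proof
  fix z assume "z \<in> X0"
  then obtain p where p: "p \<in> Sep" "z = Inl (fst p, blk p, fst (snd p)) \<or> z = Inr (fst p, blk p, snd (snd p))"
    by (auto simp: X0_def)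
  obtain n r s where pp: "p = (n, r, s)" by (cases p) auto
  have "(n, blk p, r) \<in> S" "(n, blk p, s) \<in> S" using p(1) blk_V[OF p(1)] by (auto simp: S_def Sep_def pp)
  thus "z \<in> Inl ` S \<union> Inr ` S" using p(2) pp by auto
qed

lemma length_blk': "length (blk p) = fst p" by (cases p) (simp add: blk_def)

lemma X0_cons: "set A \<subseteq> {t. Inl t \<in> X0} \<Longrightarrow> set B \<subseteq> {t. Inr t \<in> X0} \<Longrightarrow> \<not> prov A B"
proof
  assume hA: "set A \<subseteq> {t. Inl t \<in> X0}" and hB: "set B \<subseteq> {t. Inr t \<in> X0}" and p: "prov A B"
  obtain w where pw: "provw w A B" using p by (auto simp: prov_def)
  have wV: "set w \<subseteq> V" using pw by (simp add: provw_def)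
  have AS: "set A \<subseteq> S" using hA X0S by auto
  have BS: "set B \<subseteq> S" using hB X0S by auto
  define pA where "pA a = (SOME p. p \<in> Sep \<and> a = (fst p, blk p, fst (snd p)))" for a
  define pB where "pB b = (SOME p. p \<in> Sep \<and> b = (fst p, blk p, snd (snd p)))" for b
  define own where "own v = (SOME p. p \<in> Sep \<and> v \<in> set (blk p))" for v
  have pA: "pA a \<in> Sep \<and> a = (fst (pA a), blk (pA a), fst (snd (pA a)))" if "a \<in> set A" for a
  proof -
    have "Inl a \<in> X0" using that hA by auto
    hence "\<exists>p. p \<in> Sep \<and> a = (fst p, blk p, fst (snd p))" unfolding X0_def by auto
    thus ?thesis unfolding pA_def by (rule someI_ex)
  qed
  have pB: "pB b \<in> Sep \<and> b = (fst (pB b), blk (pB b), snd (snd (pB b)))" if "b \<in> set B" for b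
  proof -
    have "Inr b \<in> X0" using that hB by auto
    hence "\<exists>p. p \<in> Sep \<and> b = (fst p, blk p, snd (snd p))" unfolding X0_def by auto
    thus ?thesis unfolding pB_def by (rule someI_ex)
  qed
  have own: "own v \<in> Sep \<and> v \<in> set (blk (own v))" if "v \<in> set w" for v
  proof -
    have "v \<in> V" using that wV by auto
    hence "\<exists>p. p \<in> Sep \<and> v \<in> set (blk p)" unfolding V_def by blast
    thus ?thesis unfolding own_def by (rule someI_ex)
  qed
  define Q where "Q = remdups (map pA A @ map pB B @ map own w)"
  have QS: "set Q \<subseteq> Sep" using pA pB own by (auto simp: Q_def)
  have dQ: "distinct Q" by (simp add: Q_def)
  define bs where "bs = map blk Q"
  define u where "u = concat bs"
  have du: "distinct u" unfolding u_def bs_def by (rule distinct_concat_blk[OF dQ])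
  have "set u = (\<Union>q\<in>set Q. set (blk q))" by (simp add: u_def bs_def)
  hence uV: "set u \<subseteq> V" using QS unfolding V_def by blast
  have wu: "set w \<subseteq> set u"
  proof
    fix v assume v: "v \<in> set w"
    hence "own v \<in> set Q" by (simp add: Q_def)
    thus "v \<in> set u" using own[OF v] by (auto simp: u_def bs_def)
  qed
  have pu: "provw u A B" by (rule provw_lift[OF pw du uV wu AS BS])
  have covA: "\<forall>x\<in>set A. vs x \<subseteq> set u" and covB: "\<forall>x\<in>set B. vs x \<subseteq> set u" using pu by (auto simp: provw_def)
  define m where "m = length Q"
  define ks where "ks j = length (bs ! j)" for j
  define N where "N = length u"
  have N: "N = (\<Sum>j<m. ks j)" by (simp add: N_def u_def length_concat_sum ks_def m_def bs_def)
  have ksQ: "ks i = fst (Q ! i)" if "i < m" for i using that by (simp add: ks_def bs_def m_def length_blk')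
  define rr where "rr i = (if Q ! i \<in> pA ` set A then fst (snd (Q ! i)) else one L (ks i))" for i
  define ss where "ss i = (if Q ! i \<in> pB ` set B then snd (snd (Q ! i)) else zer L (ks i))" for i
  have QiS: "Q ! i \<in> Sep" if "i < m" for i using that QS by (auto simp: m_def)
  have rsc: "rr i \<in> car L (ks i) \<and> ss i \<in> car L (ks i)" if "i < m" for i
    using QiS[OF that] ksQ[OF that] by (cases "Q ! i") (auto simp: rr_def ss_def Sep_def)
  have pc: "pcyl ks i = idx u (bs ! i)" if "i < m" for i
  proof -
    have ksf: "ks = (\<lambda>j. length (bs ! j))" by (rule ext) (simp add: ks_def)
    show ?thesis using idx_concat[OF du[unfolded u_def], of i] that by (simp add: u_def ksf m_def bs_def)
  qed
  have pcs: "pcyl ks i \<in> substs (ks i) N" if "i < m" for i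
  proof -
    have "Q ! i \<in> set Q" using that by (simp add: m_def)
    hence "set (bs ! i) \<subseteq> set u" using that by (auto simp: u_def m_def bs_def intro!: bexI[of _ "Q ! i"])
    thus ?thesis using idx_substs[OF du] pc[OF that] by (simp add: ks_def N_def)
  qed
  define F where "F i = sb L (ks i) N (pcyl ks i) (rr i)" for i
  define G where "G i = sb L (ks i) N (pcyl ks i) (ss i)" for i
  have Fc: "F i \<in> car L N" "G i \<in> car L N" if "i < m" for i
    using pcs[OF that] rsc[OF that] by (auto simp: F_def G_def)
  have mF: "meets L N F m \<in> car L N" using Fc by (intro meets_car) auto
  have jG: "joins L N G m \<in> car L N" using Fc by (intro joins_car) auto
  have Fle: "le L N (meets L N F m) (F i)" if "i < m" for i
    using le_meets_iff[of m F N "meets L N F m"] Fc mF le_refl[OF mF] that by auto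
  have Gle: "le L N (G i) (joins L N G m)" if "i < m" for i
    using joins_le_iff[of m G N "joins L N G m"] Fc jG le_refl[OF jG] that by auto
  have tauA: "\<exists>i<m. tau u a = F i" if "a \<in> set A" for a
  proof -
    have "pA a \<in> set Q" using that by (simp add: Q_def)
    then obtain i where i: "i < m" "Q ! i = pA a" by (auto simp: m_def in_set_conv_nth)
    have e: "a = (fst (pA a), blk (pA a), fst (snd (pA a)))" using pA[OF that] by simp
    have "rr i = fst (snd (pA a))" using i that by (simp add: rr_def)
    moreover have "ks i = fst (pA a)" using ksQ[OF i(1)] i by simp
    moreover have "pcyl ks i = idx u (blk (pA a))" using pc[OF i(1)] i by (simp add: bs_def m_def)
    ultimately have "F i = tau u a" by (subst e) (simp add: F_def tau_def N_def)
    thus ?thesis using i by auto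
  qed
  have tauB: "\<exists>i<m. tau u b = G i" if "b \<in> set B" for b
  proof -
    have "pB b \<in> set Q" using that by (simp add: Q_def)
    then obtain i where i: "i < m" "Q ! i = pB b" by (auto simp: m_def in_set_conv_nth)
    have e: "b = (fst (pB b), blk (pB b), snd (snd (pB b)))" using pB[OF that] by simp
    have "ss i = snd (snd (pB b))" using i that by (simp add: ss_def)
    moreover have "ks i = fst (pB b)" using ksQ[OF i(1)] i by simp
    moreover have "pcyl ks i = idx u (blk (pB b))" using pc[OF i(1)] i by (simp add: bs_def m_def)
    ultimately have "G i = tau u b" by (subst e) (simp add: G_def tau_def N_def)
    thus ?thesis using i by auto
  qed
  have "\<forall>a\<in>set A. le L N (meets L N F m) (tau u a)"
  proof
    fix a assume "a \<in> set A"
    then obtain i where "i < m" "tau u a = F i" using tauA by blast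
    thus "le L N (meets L N F m) (tau u a)" using Fle by simp
  qed
  hence l1: "le L N (meets L N F m) (MA u A)"
    using le_MA_iff[OF du AS covA mF[unfolded N_def]] by (simp add: N_def)
  have "\<forall>b\<in>set B. le L N (tau u b) (joins L N G m)"
  proof
    fix b assume "b \<in> set B"
    then obtain i where "i < m" "tau u b = G i" using tauB by blast
    thus "le L N (tau u b) (joins L N G m)" using Gle by simp
  qed
  hence l2: "le L N (JB u B) (joins L N G m)"
    using JB_le_iff[OF du BS covB jG[unfolded N_def]] by (simp add: N_def)
  have l0: "le L N (MA u A) (JB u B)" using pu by (simp add: provw_def N_def)
  have MAc: "MA u A \<in> car L N" "JB u B \<in> car L N" using MA_car[OF du AS covA] JB_car[OF du BS covB] by (auto simp: N_def)
  have "le L N (meets L N F m) (joins L N G m)"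
    using le_trans[OF mF MAc(1) jG l1 le_trans[OF MAc jG l0 l2]] .
  hence prem: "le L (\<Sum>j<m. ks j) (meets L (\<Sum>j<m. ks j) (\<lambda>i. sb L (ks i) (\<Sum>j<m. ks j) (pcyl ks i) (rr i)) m)
         (joins L (\<Sum>j<m. ks j) (\<lambda>i. sb L (ks i) (\<Sum>j<m. ks j) (pcyl ks i) (ss i)) m)"
  proof -
    have Ff: "F = (\<lambda>i. sb L (ks i) N (pcyl ks i) (rr i))" by (rule ext) (simp add: F_def)
    have Gf: "G = (\<lambda>i. sb L (ks i) N (pcyl ks i) (ss i))" by (rule ext) (simp add: G_def)
    show ?thesis using \<open>le L N (meets L N F m) (joins L N G m)\<close> unfolding Ff Gf N .
  qed
  have "\<forall>i<m. rr i \<in> car L (ks i) \<and> ss i \<in> car L (ks i)" using rsc by blast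
  with A0 prem obtain i where i: "i < m" "le L (ks i) (rr i) (ss i)" unfolding ax0_def by blast
  obtain n r s where q: "Q ! i = (n, r, s)" by (cases "Q ! i") auto
  have sep: "r \<in> car L n" "s \<in> car L n" "\<not> le L n r s" using QiS[OF i(1)] q by (auto simp: Sep_def)
  have kn: "ks i = n" using ksQ[OF i(1)] q by simp
  have rr: "rr i \<in> car L n" "ss i \<in> car L n" using rsc[OF i(1)] kn by auto
  have "le L n r (rr i)" using sep le_refl le_one by (auto simp: rr_def q kn)
  moreover have "le L n (ss i) s" using sep le_refl le_zer by (auto simp: ss_def q kn)
  ultimately have "le L n r s" using i(2) kn le_trans[OF sep(1) rr(1) sep(2)] le_trans[OF rr(1) rr(2) sep(2)] by auto
  thus False using sep by simp
qed

end

context pe begin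

lemma tuples_S: "x \<in> tuples V n \<Longrightarrow> r \<in> car L n \<Longrightarrow> (n, x, r) \<in> S"
  by (auto simp: tuples_def S_def)

lemma prov_x:
  assumes x: "x \<in> tuples V n" and rs: "set rs \<subseteq> car L n" and ss: "set ss \<subseteq> car L n"
    and le0: "le L n (meets L n (\<lambda>i. rs ! i) (length rs)) (joins L n (\<lambda>i. ss ! i) (length ss))"
  shows "prov (map (\<lambda>r. (n, x, r)) rs) (map (\<lambda>r. (n, x, r)) ss)"
proof -
  define w where "w = remdups x"
  have d: "distinct w" and sw: "set w = set x" by (auto simp: w_def)
  have lx: "length x = n" and xV: "set x \<subseteq> V" using x by (auto simp: tuples_def)
  have \<beta>: "idx w x \<in> substs n (length w)" using idx_substs[OF d, of x] sw lx by simp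
  have rsi: "rs ! i \<in> car L n" if "i < length rs" for i using that rs nth_mem by blast
  have ssi: "ss ! i \<in> car L n" if "i < length ss" for i using that ss nth_mem by blast
  have "MA w (map (\<lambda>r. (n, x, r)) rs) = meets L (length w) (\<lambda>i. sb L n (length w) (idx w x) (rs ! i)) (length rs)"
    unfolding MA_def length_map by (rule meets_cong) (simp add: tau_def)
  also have "\<dots> = sb L n (length w) (idx w x) (meets L n (\<lambda>i. rs ! i) (length rs))"
    using sb_meets[OF \<beta>, of "length rs" "\<lambda>i. rs ! i"] rsi by simp
  finally have e1: "MA w (map (\<lambda>r. (n, x, r)) rs) = sb L n (length w) (idx w x) (meets L n (\<lambda>i. rs ! i) (length rs))" .
  have "JB w (map (\<lambda>r. (n, x, r)) ss) = joins L (length w) (\<lambda>i. sb L n (length w) (idx w x) (ss ! i)) (length ss)"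
    unfolding JB_def length_map by (rule joins_cong) (simp add: tau_def)
  also have "\<dots> = sb L n (length w) (idx w x) (joins L n (\<lambda>i. ss ! i) (length ss))"
    using sb_joins[OF \<beta>, of "length ss" "\<lambda>i. ss ! i"] ssi by simp
  finally have e2: "JB w (map (\<lambda>r. (n, x, r)) ss) = sb L n (length w) (idx w x) (joins L n (\<lambda>i. ss ! i) (length ss))" .
  have c: "meets L n (\<lambda>i. rs ! i) (length rs) \<in> car L n" "joins L n (\<lambda>i. ss ! i) (length ss) \<in> car L n"
    using rsi ssi by (auto intro: meets_car joins_car)
  have "le L (length w) (MA w (map (\<lambda>r. (n, x, r)) rs)) (JB w (map (\<lambda>r. (n, x, r)) ss))"
    unfolding e1 e2 by (rule sb_le[OF \<beta> c le0])
  moreover have "\<forall>t\<in>set (map (\<lambda>r. (n, x, r)) rs) \<union> set (map (\<lambda>r. (n, x, r)) ss). vs t \<subseteq> set w"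
    by (force simp: vs_def sw)
  ultimately have "provw w (map (\<lambda>r. (n, x, r)) rs) (map (\<lambda>r. (n, x, r)) ss)"
    using d sw xV by (simp add: provw_def)
  thus ?thesis by (auto simp: prov_def)
qed

lemma prov_subst:
  assumes a: "\<alpha> \<in> substs n k" and x: "x \<in> tuples V k" and r: "r \<in> car L n"
  shows "prov [(k, x, sb L n k \<alpha> r)] [(n, subst_tuple n \<alpha> x, r)] \<and> prov [(n, subst_tuple n \<alpha> x, r)] [(k, x, sb L n k \<alpha> r)]"
proof -
  define w where "w = remdups x"
  have d: "distinct w" and sw: "set w = set x" by (auto simp: w_def)
  have lx: "length x = k" and xV: "set x \<subseteq> V" using x by (auto simp: tuples_def)
  have \<beta>: "idx w x \<in> substs k (length w)" using idx_substs[OF d, of x] sw lx by simp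
  have sx: "set (subst_tuple n \<alpha> x) \<subseteq> set x" by (rule set_subst_tuple[OF a lx])
  define ta where "ta = (k, x, sb L n k \<alpha> r)"
  define tb where "tb = (n, subst_tuple n \<alpha> x, r)"
  have "tau w ta = sb L k (length w) (idx w x) (sb L n k \<alpha> r)" by (simp add: tau_def ta_def)
  also have "\<dots> = sb L n (length w) (scomp n (idx w x) \<alpha>) r" using sb_comp[OF a \<beta> r] by simp
  also have "scomp n (idx w x) \<alpha> = idx w (subst_tuple n \<alpha> x)" using idx_subst[OF d _ lx a] sw by simp
  finally have e: "tau w ta = tau w tb" by (simp add: tau_def tb_def)
  have taS: "ta \<in> S" using a x r by (auto simp: ta_def tuples_def S_def)
  have tbS: "tb \<in> S" using sx xV r by (auto simp: tb_def S_def)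
  have cov: "vs ta \<subseteq> set w" "vs tb \<subseteq> set w" using sx sw by (auto simp: vs_def ta_def tb_def)
  have tc: "tau w ta \<in> car L (length w)" using tau_car[OF d taS cov(1)] .
  have M1: "MA w [ta] = tau w ta" "MA w [tb] = tau w tb" using tc e by (simp_all add: MA_def one_mt)
  have J1: "JB w [ta] = tau w ta" "JB w [tb] = tau w tb" using tc e by (simp_all add: JB_def zer_jn)
  have "provw w [ta] [tb]" "provw w [tb] [ta]"
    using d sw xV cov M1 J1 e le_refl[OF tc] by (auto simp: provw_def)
  thus ?thesis by (auto simp: prov_def ta_def tb_def)
qed

lemma cyl_substs: "cyl n \<in> substs n (Suc n)" by (auto simp: cyl_def substs_def)

lemma subst_tuple_cyl: "length xs = n \<Longrightarrow> subst_tuple n (cyl n) (xs @ [y]) = xs"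
  by (rule nth_equalityI) (auto simp: subst_tuple_def cyl_def nth_append simp del: upt_Suc)

theorem main: "\<exists>(W :: (nat \<times> 'a) set set set) (\<phi> :: nat \<Rightarrow> 'a \<Rightarrow> (nat \<times> 'a) set set list set).
           almost_morphism L W \<phi> \<and> (\<forall>n. inj_on (\<phi> n) (car L n))"
proof -
  have c0: "\<forall>A B. set A \<subseteq> {t. Inl t \<in> X0} \<longrightarrow> set B \<subseteq> {t. Inr t \<in> X0} \<longrightarrow> \<not> prov A B"
    using X0_cons by blast
  have ex: "\<exists>X. X0 \<subseteq> X \<and> X \<subseteq> Inl ` S \<union> Inr ` S \<and>
     (\<forall>A B. set A \<subseteq> {t. Inl t \<in> X} \<longrightarrow> set B \<subseteq> {t. Inr t \<in> X} \<longrightarrow> \<not> prov A B) \<and>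
     (\<forall>t\<in>S. Inl t \<in> X \<or> Inr t \<in> X)"
  proof (rule lindenbaum[of prov S X0])
    fix A B A' B' assume "prov A B" "set A \<subseteq> set A'" "set B \<subseteq> set B'" "set A' \<subseteq> S" "set B' \<subseteq> S"
    thus "prov A' B'" by (rule weaken)
  next
    fix A B t assume "set A \<subseteq> S" "set B \<subseteq> S" "t \<in> S" "prov (t#A) B" "prov A (t#B)"
    thus "prov A B" by (rule cut)
  qed (rule X0S, rule c0)
  then obtain X where X0X: "X0 \<subseteq> X" and XS: "X \<subseteq> Inl ` S \<union> Inr ` S"
    and consX: "\<forall>A B. set A \<subseteq> {t. Inl t \<in> X} \<longrightarrow> set B \<subseteq> {t. Inr t \<in> X} \<longrightarrow> \<not> prov A B"
    and tot: "\<forall>t\<in>S. Inl t \<in> X \<or> Inr t \<in> X"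
    by (elim exE conjE)
  define \<phi> where "\<phi> n r = {x \<in> tuples V n. Inl (n, x, r) \<in> X}" for n r
  have inP: "Inl t \<in> X" if "t \<in> S" "\<forall>a\<in>set A. Inl a \<in> X" "prov A [t]" for t A
  proof (rule ccontr)
    assume "Inl t \<notin> X"
    hence "Inr t \<in> X" using tot that(1) by blast
    hence "set [t] \<subseteq> {t. Inr t \<in> X}" by simp
    moreover have "set A \<subseteq> {t. Inl t \<in> X}" using that(2) by blast
    ultimately show False using consX that(3) by blast
  qed
  have outP: "Inl t \<notin> X" if "t \<in> S" "\<forall>b\<in>set B. b \<in> S \<and> Inl b \<notin> X" "prov [t] B" for t B
  proof
    assume "Inl t \<in> X"
    hence "set [t] \<subseteq> {t. Inl t \<in> X}" by simp
    moreover have "set B \<subseteq> {t. Inr t \<in> X}" using that(2) tot by blast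
    ultimately show False using consX that(3) by blast
  qed
  have one: "Inl (n, x, one L n) \<in> X" if "x \<in> tuples V n" for n x
  proof -
    have "prov (map (\<lambda>r. (n, x, r)) []) (map (\<lambda>r. (n, x, r)) [one L n])"
      by (rule prov_x[OF that]) (auto simp: zer_jn le_refl)
    thus ?thesis using inP[of "(n, x, one L n)" "[]"] tuples_S[OF that] by simp
  qed
  have zer: "Inl (n, x, zer L n) \<notin> X" if "x \<in> tuples V n" for n x
  proof -
    have "prov (map (\<lambda>r. (n, x, r)) [zer L n]) (map (\<lambda>r. (n, x, r)) [])"
      by (rule prov_x[OF that]) (auto simp: one_mt le_refl)
    thus ?thesis using outP[of "(n, x, zer L n)" "[]"] tuples_S[OF that] by simp
  qed
  have mt: "Inl (n, x, mt L n r s) \<in> X \<longleftrightarrow> Inl (n, x, r) \<in> X \<and> Inl (n, x, s) \<in> X"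
    if x: "x \<in> tuples V n" and r: "r \<in> car L n" and s: "s \<in> car L n" for n x r s
  proof -
    have p1: "prov (map (\<lambda>r. (n, x, r)) [r, s]) (map (\<lambda>r. (n, x, r)) [mt L n r s])"
      by (rule prov_x[OF x]) (use r s in \<open>auto simp: zer_jn one_mt le_refl numeral_2_eq_2\<close>)
    have p2: "prov (map (\<lambda>r. (n, x, r)) [mt L n r s]) (map (\<lambda>r. (n, x, r)) [r])"
      by (rule prov_x[OF x]) (use r s in \<open>auto simp: zer_jn one_mt mt_le1\<close>)
    have p3: "prov (map (\<lambda>r. (n, x, r)) [mt L n r s]) (map (\<lambda>r. (n, x, r)) [s])"
      by (rule prov_x[OF x]) (use r s in \<open>auto simp: zer_jn one_mt mt_le2\<close>)
    have S3: "(n, x, r) \<in> S" "(n, x, s) \<in> S" "(n, x, mt L n r s) \<in> S" using tuples_S[OF x] r s by auto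
    show ?thesis
    proof
      assume h: "Inl (n, x, mt L n r s) \<in> X"
      have "Inl (n, x, r) \<in> X" using outP[of "(n, x, mt L n r s)" "[(n, x, r)]"] p2 S3 h by auto
      moreover have "Inl (n, x, s) \<in> X" using outP[of "(n, x, mt L n r s)" "[(n, x, s)]"] p3 S3 h by auto
      ultimately show "Inl (n, x, r) \<in> X \<and> Inl (n, x, s) \<in> X" by simp
    next
      assume "Inl (n, x, r) \<in> X \<and> Inl (n, x, s) \<in> X"
      thus "Inl (n, x, mt L n r s) \<in> X" using inP[of "(n, x, mt L n r s)" "[(n, x, r), (n, x, s)]"] p1 S3 by auto
    qed
  qed
  have jn: "Inl (n, x, jn L n r s) \<in> X \<longleftrightarrow> Inl (n, x, r) \<in> X \<or> Inl (n, x, s) \<in> X"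
    if x: "x \<in> tuples V n" and r: "r \<in> car L n" and s: "s \<in> car L n" for n x r s
  proof -
    have p1: "prov (map (\<lambda>r. (n, x, r)) [jn L n r s]) (map (\<lambda>r. (n, x, r)) [r, s])"
      by (rule prov_x[OF x]) (use r s in \<open>auto simp: zer_jn one_mt le_refl numeral_2_eq_2\<close>)
    have p2: "prov (map (\<lambda>r. (n, x, r)) [r]) (map (\<lambda>r. (n, x, r)) [jn L n r s])"
      by (rule prov_x[OF x]) (use r s in \<open>auto simp: zer_jn one_mt jn_ge1\<close>)
    have p3: "prov (map (\<lambda>r. (n, x, r)) [s]) (map (\<lambda>r. (n, x, r)) [jn L n r s])"
      by (rule prov_x[OF x]) (use r s in \<open>auto simp: zer_jn one_mt jn_ge2\<close>)
    have S3: "(n, x, r) \<in> S" "(n, x, s) \<in> S" "(n, x, jn L n r s) \<in> S" using tuples_S[OF x] r s by auto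
    show ?thesis
    proof
      assume h: "Inl (n, x, jn L n r s) \<in> X"
      show "Inl (n, x, r) \<in> X \<or> Inl (n, x, s) \<in> X"
        using outP[of "(n, x, jn L n r s)" "[(n, x, r), (n, x, s)]"] p1 S3 h by auto
    next
      assume "Inl (n, x, r) \<in> X \<or> Inl (n, x, s) \<in> X"
      thus "Inl (n, x, jn L n r s) \<in> X"
        using inP[of "(n, x, jn L n r s)" "[(n, x, r)]"] inP[of "(n, x, jn L n r s)" "[(n, x, s)]"] p2 p3 S3 by auto
    qed
  qed
  have self: "prov [(n, x, s)] [(n, x, s)]" if x: "x \<in> tuples V n" and s: "s \<in> car L n" for n x s
  proof -
    have "prov (map (\<lambda>r. (n, x, r)) [s]) (map (\<lambda>r. (n, x, r)) [s])"
      by (rule prov_x[OF x]) (use s in \<open>auto simp: zer_jn one_mt le_refl\<close>)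
    thus ?thesis by simp
  qed
  have sub: "\<phi> k (sb L n k \<alpha> r) = subst_rel V n k \<alpha> (\<phi> n r)"
    if a: "\<alpha> \<in> substs n k" and r: "r \<in> car L n" for n k \<alpha> r
  proof (rule set_eqI)
    fix x
    show "x \<in> \<phi> k (sb L n k \<alpha> r) \<longleftrightarrow> x \<in> subst_rel V n k \<alpha> (\<phi> n r)"
    proof (cases "x \<in> tuples V k")
      case True
      have lx: "length x = k" and xV: "set x \<subseteq> V" using True by (auto simp: tuples_def)
      have yt: "subst_tuple n \<alpha> x \<in> tuples V n" using set_subst_tuple[OF a lx] xV by (auto simp: tuples_def)
      have Sa: "(k, x, sb L n k \<alpha> r) \<in> S" using tuples_S[OF True] a r by simp
      have Sb: "(n, subst_tuple n \<alpha> x, r) \<in> S" using tuples_S[OF yt r] .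
      have "Inl (k, x, sb L n k \<alpha> r) \<in> X \<longleftrightarrow> Inl (n, subst_tuple n \<alpha> x, r) \<in> X"
        using prov_subst[OF a True r] inP[OF Sa, of "[(n, subst_tuple n \<alpha> x, r)]"] inP[OF Sb, of "[(k, x, sb L n k \<alpha> r)]"]
        by auto
      thus ?thesis using True yt by (simp add: \<phi>_def subst_rel_def)
    next
      case False thus ?thesis by (simp add: \<phi>_def subst_rel_def)
    qed
  qed
  have mono: "\<phi> n r \<subseteq> \<phi> n s" if "r \<in> car L n" "s \<in> car L n" "le L n r s" for n r s
  proof -
    have "r = mt L n r s" using that(3) by (simp add: le_def)
    hence "\<phi> n r = \<phi> n (mt L n r s)" by simp
    thus ?thesis using mt[OF _ that(1,2)] by (auto simp: \<phi>_def)
  qed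
  have am: "almost_morphism L V \<phi>"
    unfolding almost_morphism_def
  proof (intro conjI allI ballI impI)
    fix n r show "\<phi> n r \<subseteq> tuples V n" by (auto simp: \<phi>_def)
  next
    fix n k \<alpha> r assume "\<alpha> \<in> substs n k" "r \<in> car L n"
    thus "\<phi> k (sb L n k \<alpha> r) = subst_rel V n k \<alpha> (\<phi> n r)" by (rule sub)
  next
    fix n show "\<phi> n (zer L n) = {}" using zer by (auto simp: \<phi>_def)
  next
    fix n show "\<phi> n (one L n) = tuples V n" using one by (auto simp: \<phi>_def)
  next
    fix n x y assume "x \<in> car L n" "y \<in> car L n"
    thus "\<phi> n (jn L n x y) = \<phi> n x \<union> \<phi> n y" using jn by (auto simp: \<phi>_def)
  next
    fix n x y assume "x \<in> car L n" "y \<in> car L n"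
    thus "\<phi> n (mt L n x y) = \<phi> n x \<inter> \<phi> n y" using mt by (auto simp: \<phi>_def)
  next
    fix n r assume r: "r \<in> car L (Suc n)"
    show "ex_rel V n (\<phi> (Suc n) r) \<subseteq> \<phi> n (ex L n r)"
    proof
      fix xs assume "xs \<in> ex_rel V n (\<phi> (Suc n) r)"
      then obtain y where xs: "xs \<in> tuples V n" and y: "y \<in> V" and xy: "xs @ [y] \<in> \<phi> (Suc n) r"
        by (auto simp: ex_rel_def)
      define c where "c = sb L n (Suc n) (cyl n) (ex L n r)"
      have cc: "c \<in> car L (Suc n)" using r cyl_substs by (simp add: c_def)
      have "le L (Suc n) r c" using A8 r by (simp add: ax8_def c_def)
      hence "xs @ [y] \<in> \<phi> (Suc n) c" using mono[OF r cc] xy by blast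
      hence "subst_tuple n (cyl n) (xs @ [y]) \<in> \<phi> n (ex L n r)"
        using sub[OF cyl_substs ex_car[OF r]] by (simp add: c_def subst_rel_def)
      moreover have "length xs = n" using xs by (simp add: tuples_def)
      ultimately show "xs \<in> \<phi> n (ex L n r)" using subst_tuple_cyl[of xs n y] by simp
    qed
  qed
  have sepP: "\<phi> n r \<noteq> \<phi> n s" if r: "r \<in> car L n" and s: "s \<in> car L n" and nle: "\<not> le L n r s" for n r s
  proof
    assume eq: "\<phi> n r = \<phi> n s"
    define p where "p = (n, r, s)"
    have pS: "p \<in> Sep" using r s nle by (simp add: p_def Sep_def)
    have bt: "blk p \<in> tuples V n" using blk_V[OF pS] by (simp add: tuples_def p_def)
    have "Inl (fst p, blk p, fst (snd p)) \<in> X0" "Inr (fst p, blk p, snd (snd p)) \<in> X0"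
      using pS unfolding X0_def by blast+
    hence "Inl (n, blk p, r) \<in> X" "Inr (n, blk p, s) \<in> X" using X0X by (auto simp: p_def)
    hence "blk p \<in> \<phi> n r" using bt by (simp add: \<phi>_def)
    hence "blk p \<in> \<phi> n s" using eq by simp
    hence "Inl (n, blk p, s) \<in> X" by (simp add: \<phi>_def)
    moreover have "Inr (n, blk p, s) \<in> X" by fact
    ultimately have "set [(n, blk p, s)] \<subseteq> {t. Inl t \<in> X}" "set [(n, blk p, s)] \<subseteq> {t. Inr t \<in> X}" by auto
    thus False using consX self[OF bt s] by blast
  qed
  have "inj_on (\<phi> n) (car L n)" for n
  proof (rule inj_onI)
    fix r s assume r: "r \<in> car L n" and s: "s \<in> car L n" and eq: "\<phi> n r = \<phi> n s"
    show "r = s"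
    proof (rule ccontr)
      assume "r \<noteq> s"
      hence "\<not> le L n r s \<or> \<not> le L n s r" using le_antisym[OF r s] by blast
      thus False using sepP[OF r s] sepP[OF s r] eq by auto
    qed
  qed
  thus ?thesis using am by blast
qed

end

theorem lemma4p10:
  fixes L :: "('a, 'b) pe_alg_scheme"
  assumes "pe_algebra L"
    and "ax0 L" and "ax1 L" and "ax2 L" and "ax3 L" and "ax4 L" and "ax8 L"
  shows "\<exists>(W :: (nat \<times> 'a) set set set) (\<phi> :: nat \<Rightarrow> 'a \<Rightarrow> (nat \<times> 'a) set set list set).
           almost_morphism L W \<phi> \<and> (\<forall>n. inj_on (\<phi> n) (car L n))"
proof -
  interpret pe L by (rule pe.intro) (fact assms)+
  show ?thesis by (rule main)
qed

end
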